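(* For all Maya diagrams $\sigma,\sigma'$, \[ \langle\sigma',A(x;t)\sigma\rangle=\sum_{h}\prod_{i\in\mathbb{Z}}\Omega(h_{i-1},\sigma_i,h_i,\sigma'_i), \] where the sum runs over all row configurations $h$ from $\sigma$ to $\sigma'$ and the vertex weights are $\omega_1=\omega_3=\omega_5=1$, $\omega_2=-x$, $\omega_4=tx$, $\omega_6=(t-1)x$.
   Context: Maya diagrams are maps $\sigma:\mathbb{Z}\to\{0,1\}$ with $\sigma_i=1$ for $i\ll0$ and $\sigma_i=0$ for $i\gg0$. $\mathcal{F}(t)$ is the $\mathbb{C}(t)$-space with basis the Maya diagrams, with the bilinear form $\langle\cdot,\cdot\rangle$ making them orthonormal. Operators: $\psi^+_i(t)\sigma=(\sigma+\epsilon_i)\prod_{j>i}(-t)^{\sigma_j}$ if $\sigma_i=0$, else $0$; $\psi^-_i(t)\sigma=(\sigma-\epsilon_i)\prod_{j>i}(-t)^{-\sigma_j}$ if $\sigma_i=1$, else $0$ ($\epsilon_i$ the indicator of $i$); $E_{ij}(t)=(1-t)\psi_i^-(t)\psi_j^+(t)$; $A(x;t)=1+\sum_{r>0}\sum_{i_1<j_1<\cdots<i_r<j_r}(xt)^{j_1-i_1+\cdots+j_r-i_r}E_{i_1j_1}(t)\cdots E_{i_rj_r}(t)$. Six-vertex row configurations: a vertex is a 4-tuple (W,N,E,S) of edge values in $\{0,1\}$; the allowed ones and their weights are $\Omega(0,0,0,0)=\omega_1$, $\Omega(1,1,1,1)=\omega_2$, $\Omega(0,1,0,1)=\omega_3$,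 $\Omega(1,0,1,0)=\omega_4$, $\Omega(1,0,0,1)=\omega_5$, $\Omega(0,1,1,0)=\omega_6$, and $\Omega=0$ for all other tuples. A row configuration from $\sigma$ (top) to $\sigma'$ (bottom) is a map $h:\mathbb{Z}\to\{0,1\}$ ($h_i$ the horizontal edge between vertices $i$ and $i+1$) with $h_i=0$ for all $|i|$ sufficiently large and such that $(h_{i-1},\sigma_i,h_i,\sigma'_i)$ is allowed for every $i$. *)

theory Defs
  imports Main "HOL-Library.Groups_Big_Fun"
begin

(* A diagram is a map int => bool (True = 1, False = 0). *)
type_synonym diagram = "int \<Rightarrow> bool"

definition maya :: "diagram \<Rightarrow> bool" where
  "maya \<sigma> \<longleftrightarrow> (\<exists>a. \<forall>i<a. \<sigma> i) \<and> (\<exists>b. \<forall>i>b. \<not> \<sigma> i)"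

(* Vectors of the Fock space: coefficient functions on diagrams
   (elements of F(t) are the finitely supported ones, supported on Maya diagrams). *)
type_synonym 'a vec = "diagram \<Rightarrow> 'a"

definition basis :: "diagram \<Rightarrow> 'a::field vec" where
  "basis \<sigma> = (\<lambda>\<tau>. if \<tau> = \<sigma> then 1 else 0)"

definition pair :: "'a::field vec \<Rightarrow> 'a vec \<Rightarrow> 'a" where
  "pair u v = (\<Sum>\<tau>. u \<tau> * v \<tau>)"

definition lin :: "(diagram \<Rightarrow> 'a::field vec) \<Rightarrow> 'a vec \<Rightarrow> 'a vec" where
  "lin L v = (\<lambda>\<tau>. \<Sum>\<rho>. v \<rho> * L \<rho> \<tau>)"

definition scale :: "'a::field \<Rightarrow> 'a vec \<Rightarrow> 'a vec" where
  "scale c v = (\<lambda>\<tau>. c * v \<tau>)"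

definition sign_above :: "'a::field \<Rightarrow> int \<Rightarrow> diagram \<Rightarrow> 'a" where
  "sign_above t i \<sigma> = (- t) ^ card {j. i < j \<and> \<sigma> j}"

definition psi_plus :: "'a::field \<Rightarrow> int \<Rightarrow> 'a vec \<Rightarrow> 'a vec" where
  "psi_plus t i = lin (\<lambda>\<sigma>. if \<not> \<sigma> i
       then scale (sign_above t i \<sigma>) (basis (\<sigma>(i := True))) else (\<lambda>_. 0))"

definition psi_minus :: "'a::field \<Rightarrow> int \<Rightarrow> 'a vec \<Rightarrow> 'a vec" where
  "psi_minus t i = lin (\<lambda>\<sigma>. if \<sigma> i
       then scale (inverse (sign_above t i \<sigma>)) (basis (\<sigma>(i := False))) else (\<lambda>_. 0))"

definition E_op :: "'a::field \<Rightarrow> int \<Rightarrow> int \<Rightarrow> 'a vec \<Rightarrow> 'a vec" where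
  "E_op t i j v = scale (1 - t) (psi_minus t i (psi_plus t j v))"

definition admissible :: "(int \<times> int) list \<Rightarrow> bool" where
  "admissible ps \<longleftrightarrow> ps \<noteq> [] \<and> sorted_wrt (<) (concat (map (\<lambda>(i, j). [i, j]) ps))"

definition degree_of :: "(int \<times> int) list \<Rightarrow> nat" where
  "degree_of ps = sum_list (map (\<lambda>(i, j). nat (j - i)) ps)"

(* E_{i1 j1} ... E_{ir jr} v  (E_{ir jr} applied first) *)
definition E_prod :: "'a::field \<Rightarrow> (int \<times> int) list \<Rightarrow> 'a vec \<Rightarrow> 'a vec" where
  "E_prod t ps v = foldr (\<lambda>(i, j) w. E_op t i j w) ps v"

(* A(x;t) v, computed coefficientwise (each coefficient is a finite sum) *)
definition A_op :: "'a::field \<Rightarrow> 'a \<Rightarrow> 'a vec \<Rightarrow> 'a vec" where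
  "A_op x t v = (\<lambda>\<tau>. v \<tau> +
     (\<Sum>ps. if admissible ps then (x * t) ^ degree_of ps * E_prod t ps v \<tau> else 0))"

definition Omega :: "'a \<Rightarrow> 'a \<Rightarrow> 'a \<Rightarrow> 'a \<Rightarrow> 'a \<Rightarrow> 'a \<Rightarrow>
    bool \<Rightarrow> bool \<Rightarrow> bool \<Rightarrow> bool \<Rightarrow> 'a::zero" where
  "Omega w1 w2 w3 w4 w5 w6 W N E S =
     (if (W, N, E, S) = (False, False, False, False) then w1
      else if (W, N, E, S) = (True, True, True, True) then w2
      else if (W, N, E, S) = (False, True, False, True) then w3
      else if (W, N, E, S) = (True, False, True, False) then w4
      else if (W, N, E, S) = (True, False, False, True) then w5
      else if (W, N, E, S) = (False, True, True, False) then w6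
      else 0)"

definition allowed :: "bool \<Rightarrow> bool \<Rightarrow> bool \<Rightarrow> bool \<Rightarrow> bool" where
  "allowed W N E S \<longleftrightarrow> (W, N, E, S) \<in>
     {(False, False, False, False), (True, True, True, True), (False, True, False, True),
      (True, False, True, False), (True, False, False, True), (False, True, True, False)}"

(* row configuration from sigma (top) to sigma' (bottom); h i = edge between vertices i and i+1 *)
definition row_config :: "diagram \<Rightarrow> diagram \<Rightarrow> (int \<Rightarrow> bool) \<Rightarrow> bool" where
  "row_config \<sigma> \<sigma>' h \<longleftrightarrow> (\<exists>N. \<forall>i. \<bar>i\<bar> \<ge> N \<longrightarrow> \<not> h i)
     \<and> (\<forall>i. allowed (h (i - 1)) (\<sigma> i) (h i) (\<sigma>' i))"

end

theory Submission
  imports Defs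
begin

lemma Sum_any_single:
  assumes "\<And>b. b \<noteq> a \<Longrightarrow> g b = (0::'b::comm_monoid_add)"
  shows "Sum_any g = g a"
proof -
  have "{b. g b \<noteq> 0} \<subseteq> {a}" using assms by auto
  then show ?thesis by (simp add: Sum_any.expand_superset [of "{a}"])
qed

lemma pair_basis: "pair (basis \<sigma>') v = v \<sigma>'"
  unfolding pair_def by (subst Sum_any_single[where a="\<sigma>'"]) (auto simp: basis_def)

lemma lin_scale_basis: "lin L (scale c (basis \<sigma>)) = scale c (L \<sigma>)"
  unfolding lin_def scale_def
  by (rule ext, subst Sum_any_single[where a="\<sigma>"]) (auto simp: basis_def)

lemma lin_zero: "lin L (\<lambda>_. 0) = (\<lambda>_. 0)"
  unfolding lin_def by simp

lemma scale_zero: "scale c (\<lambda>_. 0) = (\<lambda>_. (0::'a::field))"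
  unfolding scale_def by simp

lemma scale_scale: "scale c (scale d v) = scale (c * d) v"
  unfolding scale_def by (simp add: mult.assoc)

lemma maya_upd: "maya \<sigma> \<Longrightarrow> maya (\<sigma>(i := b))"
  unfolding maya_def
proof (elim conjE exE)
  fix a c assume a: "\<forall>k<a. \<sigma> k" and c: "\<forall>k>c. \<not> \<sigma> k"
  show "(\<exists>a. \<forall>k<a. (\<sigma>(i := b)) k) \<and> (\<exists>c. \<forall>k>c. \<not> (\<sigma>(i := b)) k)"
  proof
    show "\<exists>a. \<forall>k<a. (\<sigma>(i := b)) k" using a by (intro exI[of _ "min a i"]) auto
    show "\<exists>c. \<forall>k>c. \<not> (\<sigma>(i := b)) k" using c by (intro exI[of _ "max c i"]) auto
  qed
qed

lemma maya_fin_above: "maya \<sigma> \<Longrightarrow> finite {k. i < k \<and> P k \<and> \<sigma> k}"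
  unfolding maya_def
proof (elim conjE exE)
  fix a c assume c: "\<forall>k>c. \<not> \<sigma> k"
  have "{k. i < k \<and> P k \<and> \<sigma> k} \<subseteq> {i..c}" using c by force
  then show ?thesis using finite_subset by blast
qed

lemma maya_fin_diff: "maya \<sigma> \<Longrightarrow> maya \<tau> \<Longrightarrow> finite {k. \<sigma> k \<noteq> \<tau> k}"
  unfolding maya_def
proof (elim conjE exE)
  fix a c a' c' assume a: "\<forall>k<a. \<sigma> k" and c: "\<forall>k>c. \<not> \<sigma> k"
    and a': "\<forall>k<a'. \<tau> k" and c': "\<forall>k>c'. \<not> \<tau> k"
  have "{k. \<sigma> k \<noteq> \<tau> k} \<subseteq> {min a a'..max c c'}"
  proof
    fix k assume "k \<in> {k. \<sigma> k \<noteq> \<tau> k}"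
    then show "k \<in> {min a a'..max c c'}" using a c a' c'
      by (cases "k < min a a'"; cases "k > max c c'") auto
  qed
  then show ?thesis using finite_subset by blast
qed

definition gfac :: "'a::field \<Rightarrow> diagram \<Rightarrow> int \<Rightarrow> int \<Rightarrow> 'a" where
  "gfac t \<sigma> i j = (1 - t) * inverse ((- t) ^ (card {k. i < k \<and> k < j \<and> \<sigma> k} + 1))"

lemma E_op_basis:
  fixes t :: "'a::field"
  assumes "t \<noteq> 0" "maya \<tau>" "i < j"
  shows "E_op t i j (scale c (basis \<tau>)) =
    (if \<tau> i \<and> \<not> \<tau> j then scale (c * gfac t \<tau> i j) (basis (\<tau>(i := False, j := True))) else (\<lambda>_. 0))"
proof (cases "\<tau> i \<and> \<not> \<tau> j")
  case True
  let ?A = "{k. i < k \<and> k < j \<and> \<tau> k}"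
  let ?B = "{k. j < k \<and> \<tau> k}"
  have fA: "finite ?A" using maya_fin_above[OF assms(2), of i "\<lambda>k. k < j"] by simp
  have fB: "finite ?B" using maya_fin_above[OF assms(2), of j "\<lambda>k. True"] by simp
  have eq: "{k. i < k \<and> (\<tau>(j := True)) k} = insert j (?A \<union> ?B)"
    using assms(3) True by auto
  have card: "card {k. i < k \<and> (\<tau>(j := True)) k} = card ?A + 1 + card ?B"
  proof -
    have "card (?A \<union> ?B) = card ?A + card ?B" by (rule card_Un_disjoint) (use fA fB in auto)
    then show ?thesis unfolding eq using fA fB assms(3) by (subst card_insert_disjoint) auto
  qed
  have sa: "sign_above t j \<tau> = (- t) ^ card ?B" unfolding sign_above_def by simp
  have sb: "sign_above t i (\<tau>(j := True)) = (- t) ^ (card ?A + 1) * (- t) ^ card ?B"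
    unfolding sign_above_def card by (simp add: power_add)
  have upd: "\<tau>(j := True, i := False) = \<tau>(i := False, j := True)" using assms(3)
    by (auto simp: fun_eq_iff)
  have "E_op t i j (scale c (basis \<tau>)) =
     scale (1 - t) (scale (c * sign_above t j \<tau> * inverse (sign_above t i (\<tau>(j := True))))
       (basis (\<tau>(j := True, i := False))))"
    using True assms(3) unfolding E_op_def psi_plus_def psi_minus_def
    by (simp add: lin_scale_basis scale_scale mult.assoc)
  also have "\<dots> = scale (c * gfac t \<tau> i j) (basis (\<tau>(i := False, j := True)))"
    unfolding upd scale_scale sa sb gfac_def using assms(1)
    by (simp add: field_simps)
  finally show ?thesis using True by simp
next
  case False
  then show ?thesis
  proof (cases "\<tau> j")
    case True
    then show ?thesis unfolding E_op_def psi_plus_def psi_minus_def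
      by (simp add: lin_scale_basis lin_zero scale_zero)
  next
    case f: False
    with False have "\<not> \<tau> i" by simp
    then show ?thesis using f assms(3) unfolding E_op_def psi_plus_def psi_minus_def
      by (simp add: lin_scale_basis lin_zero scale_zero scale_scale)
  qed
qed


definition pos :: "(int \<times> int) list \<Rightarrow> int list" where
  "pos ps = concat (map (\<lambda>(i, j). [i, j]) ps)"

lemma pos_simps [simp]: "pos [] = []" "pos ((i, j) # r) = i # j # pos r"
  by (simp_all add: pos_def)

lemma admissible_pos: "admissible ps \<longleftrightarrow> ps \<noteq> [] \<and> sorted_wrt (<) (pos ps)"
  by (simp add: admissible_def pos_def)

fun flip :: "(int \<times> int) list \<Rightarrow> diagram \<Rightarrow> diagram" where
  "flip [] \<sigma> = \<sigma>"
| "flip ((i, j) # r) \<sigma> = (flip r \<sigma>)(i := False, j := True)"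

fun valid :: "diagram \<Rightarrow> (int \<times> int) list \<Rightarrow> bool" where
  "valid \<sigma> [] = True"
| "valid \<sigma> ((i, j) # r) = (\<sigma> i \<and> \<not> \<sigma> j \<and> valid \<sigma> r)"

fun coef :: "'a::field \<Rightarrow> diagram \<Rightarrow> (int \<times> int) list \<Rightarrow> 'a" where
  "coef t \<sigma> [] = 1"
| "coef t \<sigma> ((i, j) # r) = gfac t \<sigma> i j * coef t \<sigma> r"

lemma flip_outside: "l \<notin> set (pos ps) \<Longrightarrow> flip ps \<sigma> l = \<sigma> l"
  by (induction ps \<sigma> rule: flip.induct) auto

lemma maya_flip: "maya \<sigma> \<Longrightarrow> maya (flip ps \<sigma>)"
  by (induction ps \<sigma> rule: flip.induct) (auto intro!: maya_upd)

lemma E_prod_Cons: "E_prod t ((i, j) # r) v = E_op t i j (E_prod t r v)"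
  by (simp add: E_prod_def)

lemma E_op_zero: "E_op t i j (\<lambda>_. 0) = (\<lambda>_. 0)"
  unfolding E_op_def psi_plus_def psi_minus_def by (simp add: lin_zero scale_zero)

lemma gfac_cong:
  assumes "\<And>k. i < k \<Longrightarrow> k < j \<Longrightarrow> \<sigma> k = \<tau> k"
  shows "gfac t \<sigma> i j = gfac t \<tau> i j"
proof -
  have "{k. i < k \<and> k < j \<and> \<sigma> k} = {k. i < k \<and> k < j \<and> \<tau> k}" using assms by auto
  then show ?thesis by (simp add: gfac_def)
qed

lemma E_prod_basis:
  fixes t :: "'a::field"
  assumes "t \<noteq> 0" "maya \<sigma>" "sorted_wrt (<) (pos ps)"
  shows "E_prod t ps (scale c (basis \<sigma>)) =
    (if valid \<sigma> ps then scale (c * coef t \<sigma> ps) (basis (flip ps \<sigma>)) else (\<lambda>_. 0))"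
  using assms(3)
proof (induction ps)
  case Nil
  then show ?case by (simp add: E_prod_def)
next
  case (Cons p r)
  obtain i j where p: "p = (i, j)" by fastforce
  have ij: "i < j" and big: "\<And>l. l \<in> set (pos r) \<Longrightarrow> j < l" and sr: "sorted_wrt (<) (pos r)"
    using Cons.prems p by auto
  have agree: "\<And>l. l \<le> j \<Longrightarrow> flip r \<sigma> l = \<sigma> l"
    using big by (intro flip_outside) force
  show ?case
  proof (cases "valid \<sigma> r")
    case False
    then show ?thesis using Cons.IH[OF sr] p by (simp add: E_prod_Cons E_op_zero)
  next
    case True
    have g: "gfac t (flip r \<sigma>) i j = gfac t \<sigma> i j"
      by (rule gfac_cong) (simp add: agree)
    have "E_prod t (p # r) (scale c (basis \<sigma>)) = E_op t i j (scale (c * coef t \<sigma> r) (basis (flip r \<sigma>)))"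
      using Cons.IH[OF sr] True p by (simp add: E_prod_Cons)
    also have "\<dots> = (if \<sigma> i \<and> \<not> \<sigma> j then scale (c * coef t \<sigma> r * gfac t \<sigma> i j)
         (basis ((flip r \<sigma>)(i := False, j := True))) else (\<lambda>_. 0))"
      using E_op_basis[OF assms(1) maya_flip[OF assms(2)] ij] agree[of i] agree[of j] ij g by simp
    finally show ?thesis using True p ij
      by (simp add: mult.commute mult.left_commute fun_upd_def)
  qed
qed

lemma diff_set:
  assumes "valid \<sigma> ps" "sorted_wrt (<) (pos ps)"
  shows "set (pos ps) = {l. \<sigma> l \<noteq> flip ps \<sigma> l}"
  using assms
proof (induction ps)
  case Nil
  then show ?case by simp
next
  case (Cons p r)
  obtain i j where p: "p = (i, j)" by fastforce
  have ij: "i < j" and big: "\<And>l. l \<in> set (pos r) \<Longrightarrow> j < l" and sr: "sorted_wrt (<) (pos r)"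
    and v: "valid \<sigma> r" "\<sigma> i" "\<not> \<sigma> j"
    using Cons.prems p by auto
  have IH: "set (pos r) = {l. \<sigma> l \<noteq> flip r \<sigma> l}" using Cons.IH[OF v(1) sr] .
  have "i \<notin> set (pos r)" "j \<notin> set (pos r)" using big ij by force+
  then show ?case using IH p v ij by auto
qed

lemma pos_inj: "pos ps = pos qs \<Longrightarrow> ps = qs"
proof (induction ps arbitrary: qs)
  case Nil
  then show ?case by (cases qs) auto
next
  case (Cons p r)
  obtain i j where p: "p = (i, j)" by fastforce
  show ?case
  proof (cases qs)
    case Nil
    then show ?thesis using Cons.prems p by simp
  next
    case (Cons q r')
    obtain a b where q: "q = (a, b)" by fastforce
    show ?thesis using Cons.prems Cons.IH[of r'] \<open>qs = q # r'\<close> p q by simp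
  qed
qed

lemma ps_unique:
  assumes "valid \<sigma> ps" "sorted_wrt (<) (pos ps)" "valid \<sigma> qs" "sorted_wrt (<) (pos qs)"
    "flip ps \<sigma> = flip qs \<sigma>"
  shows "ps = qs"
proof -
  have "set (pos ps) = set (pos qs)" using diff_set assms by metis
  then have "pos ps = pos qs" using assms(2,4)
    by (metis sorted_distinct_set_unique strict_sorted_iff)
  then show ?thesis by (rule pos_inj)
qed


definition Wt :: "'a::field \<Rightarrow> 'a \<Rightarrow> diagram \<Rightarrow> diagram \<Rightarrow> (int \<Rightarrow> bool) \<Rightarrow> int \<Rightarrow> 'a" where
  "Wt x t \<sigma> \<sigma>' h l = Omega 1 (- x) 1 (t * x) 1 ((t - 1) * x) (h (l - 1)) (\<sigma> l) (h l) (\<sigma>' l)"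

definition h0 :: "(int \<times> int) list \<Rightarrow> int \<Rightarrow> bool" where
  "h0 ps l = (\<exists>(i, j)\<in>set ps. i \<le> l \<and> l < j)"

lemma allowed_det: "allowed a b c d \<Longrightarrow> allowed a b c' d \<Longrightarrow> c = c'"
  unfolding allowed_def by auto

lemma row_unique:
  assumes "row_config \<sigma> \<sigma>' h1" "row_config \<sigma> \<sigma>' h2"
  shows "h1 = h2"
proof -
  obtain N1 N2 where n1: "\<forall>i. \<bar>i\<bar> \<ge> N1 \<longrightarrow> \<not> h1 i" and n2: "\<forall>i. \<bar>i\<bar> \<ge> N2 \<longrightarrow> \<not> h2 i"
    using assms unfolding row_config_def by blast
  define M where "M = max (max N1 N2) 0"
  have low: "\<And>l. l \<le> - M \<Longrightarrow> h1 l = h2 l" using n1 n2 unfolding M_def by force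
  have step: "\<And>l. h1 (l - 1) = h2 (l - 1) \<Longrightarrow> h1 l = h2 l"
  proof -
    fix l assume e: "h1 (l - 1) = h2 (l - 1)"
    have a1: "allowed (h1 (l - 1)) (\<sigma> l) (h1 l) (\<sigma>' l)" and a2: "allowed (h2 (l - 1)) (\<sigma> l) (h2 l) (\<sigma>' l)"
      using assms unfolding row_config_def by auto
    from a2 have "allowed (h1 (l - 1)) (\<sigma> l) (h2 l) (\<sigma>' l)" using e by simp
    then show "h1 l = h2 l" using allowed_det[OF a1] by blast
  qed
  have "\<And>n::nat. h1 (- M + int n) = h2 (- M + int n)"
  proof -
    fix n :: nat
    show "h1 (- M + int n) = h2 (- M + int n)"
    proof (induction n)
      case 0
      then show ?case using low by simp
    next
      case (Suc n)
      then show ?case using step[of "- M + int (Suc n)"] by simp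
    qed
  qed
  then have "\<And>l. h1 l = h2 l"
  proof -
    fix l
    show "h1 l = h2 l"
    proof (cases "l \<le> - M")
      case True
      then show ?thesis using low by simp
    next
      case False
      then have "l = - M + int (nat (l + M))" by simp
      then show ?thesis using \<open>\<And>n::nat. h1 (- M + int n) = h2 (- M + int n)\<close> by metis
    qed
  qed
  then show ?thesis by auto
qed

lemma Prod_any_split:
  fixes f g :: "int \<Rightarrow> 'a::field"
  assumes "finite {l. f l \<noteq> 1}" "finite A" "\<And>l. l \<notin> A \<Longrightarrow> g l = f l" "\<And>l. l \<in> A \<Longrightarrow> f l = 1"
  shows "Prod_any g = Prod_any f * prod g A"
proof -
  let ?S = "{l. f l \<noteq> 1} \<union> A"
  have fS: "finite ?S" using assms by simp
  have g: "Prod_any g = prod g ?S"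
    by (rule Prod_any.expand_superset) (use fS assms(3) in auto)
  have f: "Prod_any f = prod f ?S"
    by (rule Prod_any.expand_superset) (use fS in auto)
  have "prod g ?S = prod g (?S - A) * prod g A"
    using fS by (metis Un_Diff_cancel2 Un_upper2 prod.subset_diff)
  moreover have "prod g (?S - A) = prod f (?S - A)" using assms(3) by simp
  moreover have "prod f ?S = prod f (?S - A) * prod f A"
    using fS by (metis Un_Diff_cancel2 Un_upper2 prod.subset_diff)
  moreover have "prod f A = 1" using assms(4) by simp
  ultimately show ?thesis using g f by simp
qed

lemma row_fin:
  assumes "row_config \<sigma> \<sigma>' h" "maya \<sigma>" "maya \<sigma>'"
  shows "finite {l. Wt x t \<sigma> \<sigma>' h l \<noteq> 1}"
proof -
  obtain N where n: "\<forall>i. \<bar>i\<bar> \<ge> N \<longrightarrow> \<not> h i" using assms unfolding row_config_def by blast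
  have "{l. Wt x t \<sigma> \<sigma>' h l \<noteq> 1} \<subseteq> {-N-1..N+1} \<union> {l. \<sigma> l \<noteq> \<sigma>' l}"
  proof
    fix l assume "l \<in> {l. Wt x t \<sigma> \<sigma>' h l \<noteq> 1}"
    then have w: "Wt x t \<sigma> \<sigma>' h l \<noteq> 1" by simp
    show "l \<in> {-N-1..N+1} \<union> {l. \<sigma> l \<noteq> \<sigma>' l}"
    proof (rule ccontr)
      assume "l \<notin> {-N-1..N+1} \<union> {l. \<sigma> l \<noteq> \<sigma>' l}"
      then have "\<not> h l" "\<not> h (l - 1)" "\<sigma> l = \<sigma>' l" using n by auto
      then show False using w unfolding Wt_def Omega_def by (cases "\<sigma> l") auto
    qed
  qed
  moreover have "finite ({-N-1..N+1} \<union> {l. \<sigma> l \<noteq> \<sigma>' l})"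
    using maya_fin_diff[OF assms(2,3)] by simp
  ultimately show ?thesis using finite_subset by blast
qed

lemma alg:
  fixes x t :: "'a::field"
  assumes "t \<noteq> 0" "m \<le> n"
  shows "(t - 1) * x * ((- x) ^ m * (t * x) ^ (n - m)) = (x * t) ^ (n + 1) * ((1 - t) * inverse ((- t) ^ (m + 1)))"
proof -
  obtain k where n: "n = m + k" using assms(2) le_Suc_ex by blast
  have "(x * t) ^ (n + 1) * ((1 - t) * inverse ((- t) ^ (m + 1)))
      = x ^ (m + k + 1) * t ^ k * (t ^ (m + 1) * inverse ((- t) ^ (m + 1))) * (1 - t)"
    unfolding n by (simp add: power_mult_distrib power_add field_simps)
  also have "t ^ (m + 1) * inverse ((- t) ^ (m + 1)) = (- 1) ^ (m + 1)"
    using assms(1) by (simp add: power_minus' field_simps)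
  finally show ?thesis unfolding n by (simp add: power_mult_distrib power_add power_minus' field_simps)
qed


lemma pos_mem: "(a, b) \<in> set r \<Longrightarrow> a \<in> set (pos r) \<and> b \<in> set (pos r)"
  by (auto simp: pos_def)

lemma Omega_diag: "Omega 1 (- x) 1 (t * x) 1 ((t - 1) * x) False b False b = (1::'a::field)"
  unfolding Omega_def by (cases b) auto

lemma allowed_diag: "allowed False b False b"
  unfolding allowed_def by (cases b) auto

lemma prod_if_count:
  fixes a b :: "'a::field"
  assumes "finite S"
  shows "prod (\<lambda>l. if P l then a else b) S = a ^ card {l\<in>S. P l} * b ^ (card S - card {l\<in>S. P l})"
proof -
  have "prod (\<lambda>l. if P l then a else b) S = prod (\<lambda>_. a) (S \<inter> {l. P l}) * prod (\<lambda>_. b) (S \<inter> - {l. P l})"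
    using assms by (rule prod.If_cases)
  moreover have "S \<inter> {l. P l} = {l\<in>S. P l}" by auto
  moreover have "card (S \<inter> - {l. P l}) = card S - card {l\<in>S. P l}"
  proof -
    have "S \<inter> - {l. P l} = S - {l\<in>S. P l}" by auto
    then show ?thesis using assms by (simp add: card_Diff_subset)
  qed
  ultimately show ?thesis by simp
qed

lemma forward:
  fixes x t :: "'a::field"
  assumes "t \<noteq> 0" "maya \<sigma>" "sorted_wrt (<) (pos ps)" "valid \<sigma> ps"
  shows "row_config \<sigma> (flip ps \<sigma>) (h0 ps) \<and>
    Prod_any (Wt x t \<sigma> (flip ps \<sigma>) (h0 ps)) = (x * t) ^ degree_of ps * coef t \<sigma> ps"
  using assms(3,4)
proof (induction ps)
  case Nil
  have h: "h0 [] = (\<lambda>_. False)" by (simp add: h0_def fun_eq_iff)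
  have w: "Wt x t \<sigma> \<sigma> (\<lambda>_. False) = (\<lambda>_. 1)"
    by (simp add: fun_eq_iff Wt_def Omega_diag)
  show ?case unfolding h by (simp add: w row_config_def allowed_diag degree_of_def)
next
  case (Cons p r)
  obtain i j where p: "p = (i, j)" by fastforce
  have ij: "i < j" and big: "\<And>l. l \<in> set (pos r) \<Longrightarrow> j < l" and sr: "sorted_wrt (<) (pos r)"
    and v: "valid \<sigma> r" "\<sigma> i" "\<not> \<sigma> j"
    using Cons.prems p by auto
  define \<tau> where "\<tau> = flip r \<sigma>"
  define h where "h = h0 r"
  have IH: "row_config \<sigma> \<tau> h" "Prod_any (Wt x t \<sigma> \<tau> h) = (x * t) ^ degree_of r * coef t \<sigma> r"
    using Cons.IH[OF sr v(1)] unfolding \<tau>_def h_def by auto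
  have agree: "\<And>l. l \<le> j \<Longrightarrow> \<tau> l = \<sigma> l"
    unfolding \<tau>_def using big by (intro flip_outside) force
  have hF: "\<And>l. l \<le> j \<Longrightarrow> \<not> h l"
    unfolding h_def h0_def using big pos_mem by fastforce
  define h' where "h' = (\<lambda>l. (i \<le> l \<and> l < j) \<or> h l)"
  define \<tau>' where "\<tau>' = \<tau>(i := False, j := True)"
  have h'eq: "h0 ((i, j) # r) = h'" unfolding h'_def h_def h0_def by auto
  have \<tau>'eq: "flip ((i, j) # r) \<sigma> = \<tau>'" unfolding \<tau>'_def \<tau>_def by simp
  have out: "\<And>l. l \<notin> {i..j} \<Longrightarrow> h' (l - 1) = h (l - 1) \<and> h' l = h l \<and> \<tau>' l = \<tau> l"
    unfolding h'_def \<tau>'_def using ij by auto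
  have rc: "row_config \<sigma> \<tau>' h'"
    unfolding row_config_def
  proof
    obtain N where n: "\<forall>l. \<bar>l\<bar> \<ge> N \<longrightarrow> \<not> h l" using IH(1) unfolding row_config_def by blast
    show "\<exists>N. \<forall>l. \<bar>l\<bar> \<ge> N \<longrightarrow> \<not> h' l"
      using n by (intro exI[of _ "max N (\<bar>i\<bar> + \<bar>j\<bar> + 1)"]) (auto simp: h'_def)
    show "\<forall>l. allowed (h' (l - 1)) (\<sigma> l) (h' l) (\<tau>' l)"
    proof
      fix l
      show "allowed (h' (l - 1)) (\<sigma> l) (h' l) (\<tau>' l)"
      proof (cases "l \<in> {i..j}")
        case False
        then show ?thesis using out[OF False] IH(1) unfolding row_config_def by simp
      next
        case True
        consider "l = i" | "i < l \<and> l < j" | "l = j" using True by force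
        then show ?thesis
        proof cases
          case 1
          then show ?thesis using hF[of "i - 1"] ij v unfolding h'_def \<tau>'_def allowed_def by simp
        next
          case 2
          then show ?thesis using agree[of l] hF[of l] hF[of "l - 1"] unfolding h'_def \<tau>'_def
            by (cases "\<sigma> l") (simp_all add: allowed_def)
        next
          case 3
          then show ?thesis using hF[of j] ij v unfolding h'_def \<tau>'_def allowed_def by simp
        qed
      qed
    qed
  qed
  have fin: "finite {l. Wt x t \<sigma> \<tau> h l \<noteq> 1}"
    by (rule row_fin[OF IH(1) assms(2)]) (simp add: \<tau>_def maya_flip assms(2))
  have split: "Prod_any (Wt x t \<sigma> \<tau>' h') = Prod_any (Wt x t \<sigma> \<tau> h) * prod (Wt x t \<sigma> \<tau>' h') {i..j}"
  proof (rule Prod_any_split[OF fin])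
    show "\<And>l. l \<notin> {i..j} \<Longrightarrow> Wt x t \<sigma> \<tau>' h' l = Wt x t \<sigma> \<tau> h l"
      using out unfolding Wt_def by simp
    show "\<And>l. l \<in> {i..j} \<Longrightarrow> Wt x t \<sigma> \<tau> h l = 1"
      unfolding Wt_def using hF agree by (simp add: Omega_diag)
  qed simp
  define S where "S = {i<..<j}"
  define m where "m = card {l\<in>S. \<sigma> l}"
  have fS: "finite S" unfolding S_def by simp
  have ivl: "{i..j} = insert i (insert j S)" unfolding S_def using ij by auto
  have mid: "prod (Wt x t \<sigma> \<tau>' h') S = prod (\<lambda>l. if \<sigma> l then - x else t * x) S"
  proof (rule prod.cong)
    fix l assume "l \<in> S"
    then have "i < l" "l < j" unfolding S_def by auto
    then show "Wt x t \<sigma> \<tau>' h' l = (if \<sigma> l then - x else t * x)"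
      unfolding Wt_def h'_def \<tau>'_def using agree[of l] by (simp add: Omega_def)
  qed simp
  have wi: "Wt x t \<sigma> \<tau>' h' i = (t - 1) * x"
    unfolding Wt_def h'_def \<tau>'_def using hF[of "i - 1"] ij v by (simp add: Omega_def)
  have wj: "Wt x t \<sigma> \<tau>' h' j = 1"
    unfolding Wt_def h'_def \<tau>'_def using hF[of j] ij v by (simp add: Omega_def)
  have cS: "card S = nat (j - i - 1)" unfolding S_def by simp
  have mle: "m \<le> card S" unfolding m_def using fS by (intro card_mono) auto
  have gset: "{k. i < k \<and> k < j \<and> \<sigma> k} = {l\<in>S. \<sigma> l}" unfolding S_def by auto
  have "prod (Wt x t \<sigma> \<tau>' h') {i..j} = (t - 1) * x * ((- x) ^ m * (t * x) ^ (card S - m))"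
  proof -
    have "i \<notin> insert j S" "j \<notin> S" using ij unfolding S_def by auto
    then have "prod (Wt x t \<sigma> \<tau>' h') (insert i (insert j S)) =
        Wt x t \<sigma> \<tau>' h' i * (Wt x t \<sigma> \<tau>' h' j * prod (Wt x t \<sigma> \<tau>' h') S)"
      using fS by simp
    also have "\<dots> = (t - 1) * x * ((- x) ^ m * (t * x) ^ (card S - m))"
      unfolding wi wj mid prod_if_count[OF fS] m_def by simp
    finally show ?thesis unfolding ivl .
  qed
  also have "\<dots> = (x * t) ^ (card S + 1) * gfac t \<sigma> i j"
    unfolding gfac_def gset m_def[symmetric] by (rule alg[OF assms(1) mle])
  also have "card S + 1 = nat (j - i)" using cS ij by simp
  finally have pr: "prod (Wt x t \<sigma> \<tau>' h') {i..j} = (x * t) ^ nat (j - i) * gfac t \<sigma> i j" .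
  have deg: "degree_of ((i, j) # r) = nat (j - i) + degree_of r" by (simp add: degree_of_def)
  show ?case unfolding p h'eq \<tau>'eq
    using rc split IH(2) pr deg by (simp add: power_add field_simps)
qed


lemma row_fin_h: "row_config \<sigma> \<sigma>' h \<Longrightarrow> finite {l. h l}"
proof -
  assume "row_config \<sigma> \<sigma>' h"
  then obtain N where n: "\<forall>l. \<bar>l\<bar> \<ge> N \<longrightarrow> \<not> h l" unfolding row_config_def by blast
  have "{l. h l} \<subseteq> {-N..N}" using n by force
  then show ?thesis using finite_subset by blast
qed

lemma converse:
  assumes "row_config \<sigma> \<sigma>' h" "maya \<sigma>" "maya \<sigma>'"
  shows "\<exists>ps. sorted_wrt (<) (pos ps) \<and> valid \<sigma> ps \<and> flip ps \<sigma> = \<sigma>'"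
  using assms(1,3)
proof (induction "card {l. h l}" arbitrary: \<sigma>' h rule: less_induct)
  case less
  define S where "S = {l. h l}"
  have fS: "finite S" unfolding S_def using row_fin_h[OF less.prems(1)] .
  have al: "\<And>l. allowed (h (l - 1)) (\<sigma> l) (h l) (\<sigma>' l)" using less.prems(1) unfolding row_config_def by blast
  show ?case
  proof (cases "S = {}")
    case True
    then have "\<And>l. \<not> h l" unfolding S_def by auto
    then have "\<sigma> = \<sigma>'" using al by (auto simp: fun_eq_iff allowed_def)
    then show ?thesis by (intro exI[of _ "[]"]) simp
  next
    case False
    define a where "a = Min S"
    have aS: "a \<in> S" and amin: "\<And>l. l \<in> S \<Longrightarrow> a \<le> l" unfolding a_def using fS False by auto
    define B where "B = {l. a < l \<and> l \<le> Max S + 1 \<and> \<not> h l}"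
    have fB: "finite B" unfolding B_def by (rule finite_subset[of _ "{a..Max S + 1}"]) auto
    have "Max S + 1 \<in> B"
    proof -
      have "a \<le> Max S" using aS fS by simp
      moreover have "\<not> h (Max S + 1)"
      proof
        assume "h (Max S + 1)"
        then have "Max S + 1 \<in> S" unfolding S_def by simp
        then show False using fS by (metis Max_ge less_add_one not_le)
      qed
      ultimately show ?thesis unfolding B_def by simp
    qed
    then have BnE: "B \<noteq> {}" by auto
    define b where "b = Min B"
    have bB: "b \<in> B" and bmin: "\<And>l. l \<in> B \<Longrightarrow> b \<le> l" unfolding b_def using fB BnE by auto
    have ab: "a < b" and hb: "\<not> h b" and bmax: "b \<le> Max S + 1" using bB unfolding B_def by auto
    have ha: "h a" using aS unfolding S_def by simp
    have hin: "\<And>l. a \<le> l \<Longrightarrow> l < b \<Longrightarrow> h l"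
    proof -
      fix l assume l: "a \<le> l" "l < b"
      show "h l"
      proof (cases "l = a")
        case True then show ?thesis using ha by simp
      next
        case False
        show ?thesis
        proof (rule ccontr)
          assume "\<not> h l"
          then have "l \<in> B" unfolding B_def using l False bmax by auto
          then show False using bmin l by force
        qed
      qed
    qed
    have hlow: "\<And>l. l < a \<Longrightarrow> \<not> h l" using amin unfolding S_def by force
    have sa: "\<sigma> a \<and> \<not> \<sigma>' a" using al[of a] hlow[of "a - 1"] ha by (auto simp: allowed_def)
    have sb: "\<not> \<sigma> b \<and> \<sigma>' b" using al[of b] hin[of "b - 1"] hb ab by (auto simp: allowed_def)
    have smid: "\<And>l. a < l \<Longrightarrow> l < b \<Longrightarrow> \<sigma> l = \<sigma>' l"
    proof -
      fix l assume "a < l" "l < b"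
      then have "h (l - 1)" "h l" using hin by auto
      then show "\<sigma> l = \<sigma>' l" using al[of l] by (cases "\<sigma> l"; auto simp: allowed_def)
    qed
    have slow: "\<And>l. l < a \<Longrightarrow> \<sigma> l = \<sigma>' l"
    proof -
      fix l assume "l < a"
      then have "\<not> h (l - 1)" "\<not> h l" using hlow by auto
      then show "\<sigma> l = \<sigma>' l" using al[of l] by (cases "\<sigma> l"; auto simp: allowed_def)
    qed
    define \<sigma>1 where "\<sigma>1 = \<sigma>'(a := True, b := False)"
    define h1 where "h1 = (\<lambda>l. h l \<and> \<not> (a \<le> l \<and> l < b))"
    have rc1: "row_config \<sigma> \<sigma>1 h1"
      unfolding row_config_def
    proof
      obtain N where n: "\<forall>l. \<bar>l\<bar> \<ge> N \<longrightarrow> \<not> h l" using less.prems(1) unfolding row_config_def by blast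
      show "\<exists>N. \<forall>l. \<bar>l\<bar> \<ge> N \<longrightarrow> \<not> h1 l" using n unfolding h1_def by blast
      show "\<forall>l. allowed (h1 (l - 1)) (\<sigma> l) (h1 l) (\<sigma>1 l)"
      proof
        fix l
        consider "l < a" | "l = a" | "a < l \<and> l < b" | "l = b" | "b < l" by force
        then show "allowed (h1 (l - 1)) (\<sigma> l) (h1 l) (\<sigma>1 l)"
        proof cases
          case 1
          then show ?thesis using al[of l] ab unfolding h1_def \<sigma>1_def by auto
        next
          case 2
          then show ?thesis using hlow[of "a - 1"] sa ab unfolding h1_def \<sigma>1_def by (auto simp: allowed_def)
        next
          case 3
          then show ?thesis using smid[of l] unfolding h1_def \<sigma>1_def
            by (cases "\<sigma> l") (auto simp: allowed_def)
        next
          case 4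
          then show ?thesis using hb sb ab unfolding h1_def \<sigma>1_def by (auto simp: allowed_def)
        next
          case 5
          then show ?thesis using al[of l] ab unfolding h1_def \<sigma>1_def by auto
        qed
      qed
    qed
    have lt: "card {l. h1 l} < card {l. h l}"
    proof (rule psubset_card_mono)
      show "finite {l. h l}" using fS unfolding S_def .
      show "{l. h1 l} \<subset> {l. h l}" unfolding h1_def using ha ab by auto
    qed
    have m1: "maya \<sigma>1" unfolding \<sigma>1_def using less.prems(2) by (intro maya_upd)
    obtain ps1 where ps1: "sorted_wrt (<) (pos ps1)" "valid \<sigma> ps1" "flip ps1 \<sigma> = \<sigma>1"
      using less.hyps[OF lt rc1 m1] by blast
    have D: "set (pos ps1) = {l. \<sigma> l \<noteq> \<sigma>1 l}" using diff_set[OF ps1(2,1)] ps1(3) by simp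
    have agr: "\<And>l. l \<le> b \<Longrightarrow> \<sigma> l = \<sigma>1 l"
    proof -
      fix l assume "l \<le> b"
      then consider "l < a" | "l = a" | "a < l \<and> l < b" | "l = b" by force
      then show "\<sigma> l = \<sigma>1 l"
        by cases (use slow smid sa sb ab in \<open>auto simp: \<sigma>1_def\<close>)
    qed
    have big: "\<And>y. y \<in> set (pos ps1) \<Longrightarrow> b < y" using D agr by force
    show ?thesis
    proof (intro exI[of _ "(a, b) # ps1"] conjI)
      show "sorted_wrt (<) (pos ((a, b) # ps1))" using ps1(1) big ab by force
      show "valid \<sigma> ((a, b) # ps1)" using ps1(2) sa sb by simp
      show "flip ((a, b) # ps1) \<sigma> = \<sigma>'" using ps1(3) sa sb ab
        by (auto simp: \<sigma>1_def fun_eq_iff)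
    qed
  qed
qed


theorem proposition4p9:
  fixes x t :: "'a::field"
  assumes "t \<noteq> 0" and "maya \<sigma>" and "maya \<sigma>'"
  shows "pair (basis \<sigma>') (A_op x t (basis \<sigma>)) =
    (\<Sum>h. if row_config \<sigma> \<sigma>' h
          then (\<Prod>i. Omega 1 (- x) 1 (t * x) 1 ((t - 1) * x) (h (i - 1)) (\<sigma> i) (h i) (\<sigma>' i))
          else 0)"
proof -
  define Q where "Q ps \<longleftrightarrow> admissible ps \<and> valid \<sigma> ps \<and> flip ps \<sigma> = \<sigma>'" for ps
  define F where "F ps = (if admissible ps then (x * t) ^ degree_of ps * E_prod t ps (basis \<sigma>) \<sigma>' else 0)" for ps
  define R where "R h = (if row_config \<sigma> \<sigma>' h then Prod_any (Wt x t \<sigma> \<sigma>' h) else 0)" for h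
  have sc1: "scale 1 (basis \<sigma>) = (basis \<sigma> :: 'a vec)" by (simp add: scale_def fun_eq_iff)
  have Feq: "F ps = (if Q ps then (x * t) ^ degree_of ps * coef t \<sigma> ps else 0)" for ps
  proof (cases "admissible ps")
    case True
    then have "sorted_wrt (<) (pos ps)" by (simp add: admissible_pos)
    from E_prod_basis[OF assms(1,2) this, of 1] show ?thesis using True
      unfolding F_def Q_def sc1 by (auto simp: scale_def basis_def)
  qed (simp add: F_def Q_def)
  have LHS: "pair (basis \<sigma>') (A_op x t (basis \<sigma>)) = (if \<sigma> = \<sigma>' then 1 else 0) + Sum_any F"
    unfolding pair_basis A_op_def F_def by (simp add: basis_def)
  have RHS: "(\<Sum>h. if row_config \<sigma> \<sigma>' h
          then (\<Prod>i. Omega 1 (- x) 1 (t * x) 1 ((t - 1) * x) (h (i - 1)) (\<sigma> i) (h i) (\<sigma>' i))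
          else 0) = Sum_any R"
    unfolding R_def Wt_def by simp
  have Runiq: "Sum_any R = R h" if "row_config \<sigma> \<sigma>' h" for h
    by (rule Sum_any_single) (use row_unique[OF that] in \<open>auto simp: R_def\<close>)
  have Quniq: "Sum_any F = F ps" if "Q ps" for ps
  proof (rule Sum_any_single)
    fix qs assume "qs \<noteq> ps"
    show "F qs = 0"
    proof (rule ccontr)
      assume "F qs \<noteq> 0"
      then have "Q qs" unfolding Feq by (auto split: if_splits)
      then have "qs = ps" using that unfolding Q_def admissible_pos
        by (intro ps_unique[of \<sigma>]) auto
      then show False using \<open>qs \<noteq> ps\<close> by simp
    qed
  qed
  have noQ: "Sum_any F = 0" if "\<And>ps. \<not> Q ps"
    using that unfolding Feq by simp
  show ?thesis
  proof (cases "\<sigma> = \<sigma>'")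
    case True
    have "\<not> Q ps" for ps
    proof
      assume q: "Q ps"
      then have "set (pos ps) = {}" using diff_set[of \<sigma> ps] True unfolding Q_def admissible_pos by auto
      then show False using q unfolding Q_def admissible_pos by (cases ps) auto
    qed
    then have f0: "Sum_any F = 0" by (rule noQ)
    from forward[OF assms(1,2), of "[]" x] have fw: "row_config \<sigma> \<sigma>' (h0 [])"
      "Prod_any (Wt x t \<sigma> \<sigma>' (h0 [])) = 1" using True by (auto simp: degree_of_def)
    show ?thesis unfolding LHS RHS f0 Runiq[OF fw(1)] using True fw by (simp add: R_def)
  next
    case False
    show ?thesis
    proof (cases "\<exists>h. row_config \<sigma> \<sigma>' h")
      case True
      then obtain h where "row_config \<sigma> \<sigma>' h" by blast
      from converse[OF this assms(2,3)] obtain ps where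
        ps: "sorted_wrt (<) (pos ps)" "valid \<sigma> ps" "flip ps \<sigma> = \<sigma>'" by blast
      have "ps \<noteq> []" using ps(3) False by auto
      then have q: "Q ps" using ps unfolding Q_def admissible_pos by simp
      from forward[OF assms(1,2) ps(1,2), of x] ps(3) have fw: "row_config \<sigma> \<sigma>' (h0 ps)"
        "Prod_any (Wt x t \<sigma> \<sigma>' (h0 ps)) = (x * t) ^ degree_of ps * coef t \<sigma> ps" by auto
      show ?thesis unfolding LHS RHS Quniq[OF q] Runiq[OF fw(1)] using False fw q
        by (simp add: R_def Feq)
    next
      case nh: False
      have "\<not> Q ps" for ps
      proof
        assume "Q ps"
        then have "row_config \<sigma> \<sigma>' (h0 ps)" using forward[OF assms(1,2), of ps x]
          unfolding Q_def admissible_pos by auto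
        then show False using nh by blast
      qed
      then have f0: "Sum_any F = 0" by (rule noQ)
      have "R = (\<lambda>_. 0)" using nh by (auto simp: R_def fun_eq_iff)
      then show ?thesis unfolding LHS RHS f0 using False by simp
    qed
  qed
qed

end
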